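(* Let $\nu\in\mathbb M$. The following are equivalent: (1) $\nu$ is ergodic with respect to $\mathbb S\times\mathbb O$; (2) for every $k\ge0$, $\theta_k[\nu]$ is ergodic with respect to $\mathbb S^{2^k}$; (3) there is $n\ge0$ such that $\theta_k[\nu]$ is ergodic with respect to $\mathbb S^{2^k}$ for every $k\ge n$.
   Context: $I=\{0,1\}$. $\mathbb S$ is the left shift on $I^{\mathbb Z}$; for a measure $\eta$, $\mathbb S^j\eta$ is the pushforward. $I^{\mathbb N}$ is the space of $0$–$1$ sequences $(\alpha_i)_{i\ge1}$ with uniform Bernoulli measure $m$; $\mathbb O$ is the odometer (addition of $1$ with carry to the right: if $\alpha_1=\dots=\alpha_{n-1}=1$, $\alpha_n=0$, then $\mathbb O[\alpha]_i=0$ for $i<n$, $\mathbb O[\alpha]_n=1$, $\mathbb O[\alpha]_i=\alpha_i$ for $i>n$). $\mathbb M$ is the set of Borel probability measures on $I^{\mathbb Z}\times I^{\mathbb N}$ invariant under $\mathbb S\times\mathbb O$. For $k\ge0$, $A_{0,k}=\{\alpha:\alpha_1=\dots=\alpha_k=0\}$, and $\theta_k[\nu]$ is the normalized projection to $I^{\mathbb Z}$ of the restriction of $\nu$ to $I^{\mathbb Z}\times A_{0,k}$; it is $\mathbb S^{2^k}$-invariant. *)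

theory Defs
  imports "HOL-Probability.Probability"
begin

definition ZS :: "(int \<Rightarrow> bool) measure" where
  "ZS = PiM UNIV (\<lambda>_. count_space UNIV)"

text \<open>The one-sided space I^N; a sequence (alpha_i)_{i>=1} is represented 0-based:
  alpha_{i+1} = a i.\<close>
definition NS :: "(nat \<Rightarrow> bool) measure" where
  "NS = PiM UNIV (\<lambda>_. count_space UNIV)"

definition shift :: "(int \<Rightarrow> bool) \<Rightarrow> (int \<Rightarrow> bool)" where
  "shift x = (\<lambda>i. x (i + 1))"

text \<open>Odometer: add 1 with carry to the right (the all-ones sequence goes to all zeros).\<close>
definition odometer :: "(nat \<Rightarrow> bool) \<Rightarrow> (nat \<Rightarrow> bool)" where
  "odometer a = (if \<forall>i. a i then (\<lambda>_. False)
     else (let n = (LEAST n. \<not> a n) in (\<lambda>i. if i < n then False else if i = n then True else a i)))"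

definition SO :: "(int \<Rightarrow> bool) \<times> (nat \<Rightarrow> bool) \<Rightarrow> (int \<Rightarrow> bool) \<times> (nat \<Rightarrow> bool)" where
  "SO p = (shift (fst p), odometer (snd p))"

definition inv_measures :: "((int \<Rightarrow> bool) \<times> (nat \<Rightarrow> bool)) measure set" where
  "inv_measures = {\<nu>. prob_space \<nu> \<and> sets \<nu> = sets (ZS \<Otimes>\<^sub>M NS) \<and> distr \<nu> \<nu> SO = \<nu>}"

definition ergodic :: "'a measure \<Rightarrow> ('a \<Rightarrow> 'a) \<Rightarrow> bool" where
  "ergodic M T \<longleftrightarrow> T \<in> M \<rightarrow>\<^sub>M M \<and> distr M M T = M \<and>
     (\<forall>A \<in> sets M. T -` A \<inter> space M = A \<longrightarrow> emeasure M A = 0 \<or> emeasure M A = 1)"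

definition A0 :: "nat \<Rightarrow> (nat \<Rightarrow> bool) set" where
  "A0 k = {a. \<forall>i<k. \<not> a i}"

definition theta :: "nat \<Rightarrow> ((int \<Rightarrow> bool) \<times> (nat \<Rightarrow> bool)) measure \<Rightarrow> (int \<Rightarrow> bool) measure" where
  "theta k \<nu> = scale_measure (1 / emeasure \<nu> (UNIV \<times> A0 k))
     (distr (density \<nu> (indicator (UNIV \<times> A0 k))) ZS fst)"

end

theory Submission
  imports Defs
begin

lemma space_ZS[simp]: "space ZS = UNIV" by (simp add: ZS_def space_PiM)
lemma space_NS[simp]: "space NS = UNIV" by (simp add: NS_def space_PiM)

lemma coord_ZS[measurable]: "(\<lambda>x. x i) \<in> ZS \<rightarrow>\<^sub>M count_space UNIV"
  unfolding ZS_def by (rule measurable_component_singleton) simp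
lemma coord_NS[measurable]: "(\<lambda>x. x i) \<in> NS \<rightarrow>\<^sub>M count_space UNIV"
  unfolding NS_def by (rule measurable_component_singleton) simp

lemma shift_meas[measurable]: "shift \<in> ZS \<rightarrow>\<^sub>M ZS"
proof -
  have "(\<lambda>x i. x (i+1)) \<in> ZS \<rightarrow>\<^sub>M PiM UNIV (\<lambda>_. count_space UNIV)"
    by (rule measurable_PiM_single') auto
  then show ?thesis by (simp add: shift_def[abs_def] ZS_def)
qed

definition ishift :: "(int \<Rightarrow> bool) \<Rightarrow> (int \<Rightarrow> bool)" where
  "ishift x = (\<lambda>i. x (i - 1))"

lemma ishift_meas[measurable]: "ishift \<in> ZS \<rightarrow>\<^sub>M ZS"
proof -
  have "(\<lambda>x i. x (i - 1)) \<in> ZS \<rightarrow>\<^sub>M PiM UNIV (\<lambda>_. count_space UNIV)"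
    by (rule measurable_PiM_single') auto
  then show ?thesis by (simp add: ishift_def[abs_def] ZS_def)
qed

lemma odometer_coord: "odometer a i = (a i \<noteq> (\<forall>j<i. a j))"
proof (cases "\<forall>i. a i")
  case True then show ?thesis by (simp add: odometer_def)
next
  case False
  define n where "n = (LEAST n. \<not> a n)"
  have n1: "\<not> a n" unfolding n_def using False by (metis LeastI)
  have n2: "\<And>j. j < n \<Longrightarrow> a j" unfolding n_def using not_less_Least by blast
  have "odometer a = (\<lambda>i. if i < n then False else if i = n then True else a i)"
    unfolding odometer_def n_def Let_def using False by (simp only: if_False if_not_P[OF False])
  moreover have "i > n \<Longrightarrow> \<not> (\<forall>j<i. a j)" using n1 by blast
  ultimately show ?thesis using n1 n2 by (cases "i < n"; cases "i = n") auto
qed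

lemma odometer_meas[measurable]: "odometer \<in> NS \<rightarrow>\<^sub>M NS"
proof -
  have "(\<lambda>x i. (x i \<noteq> (\<forall>j<i. x j))) \<in> NS \<rightarrow>\<^sub>M PiM UNIV (\<lambda>_. count_space UNIV)"
    by (rule measurable_PiM_single') auto
  moreover have "odometer = (\<lambda>x i. (x i \<noteq> (\<forall>j<i. x j)))"
    by (auto simp: odometer_coord fun_eq_iff)
  ultimately show ?thesis by (simp add: NS_def)
qed

lemma SO_meas[measurable]: "SO \<in> ZS \<Otimes>\<^sub>M NS \<rightarrow>\<^sub>M ZS \<Otimes>\<^sub>M NS"
  unfolding SO_def by measurable

definition nval :: "nat \<Rightarrow> (nat \<Rightarrow> bool) \<Rightarrow> nat" where
  "nval k a = (\<Sum>i<k. if a i then 2^i else 0)"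

definition cyl :: "nat \<Rightarrow> nat \<Rightarrow> (nat \<Rightarrow> bool) set" where
  "cyl k j = {a. nval k a = j}"

lemma nval_0[simp]: "nval 0 a = 0" by (simp add: nval_def)
lemma nval_Suc: "nval (Suc k) a = nval k a + (if a k then 2^k else 0)"
  by (simp add: nval_def)

lemma nval_lt: "nval k a < 2^k"
  by (induction k) (auto simp: nval_Suc)

lemma nval_all: "nval k a + 1 = 2^k \<longleftrightarrow> (\<forall>j<k. a j)"
proof (induction k)
  case 0 then show ?case by simp
next
  case (Suc k)
  have "nval k a < 2^k" by (rule nval_lt)
  then show ?case using Suc by (auto simp: nval_Suc less_Suc_eq)
qed

lemma nval_meas[measurable]: "nval k \<in> NS \<rightarrow>\<^sub>M count_space UNIV"
proof (induction k)
  case 0 then show ?case by (simp add: nval_0[abs_def])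
next
  case (Suc k)
  have "(\<lambda>a. nval k a + (if a k then 2^k else 0)) \<in> NS \<rightarrow>\<^sub>M count_space UNIV"
    using Suc by measurable
  then show ?case by (simp add: nval_Suc[abs_def])
qed

lemma cyl_sets[measurable]: "cyl k j \<in> sets NS"
proof -
  have "cyl k j = nval k -` {j} \<inter> space NS" by (auto simp: cyl_def)
  then show ?thesis by (metis measurable_sets nval_meas sets_UNIV)
qed

lemma A0_cyl: "A0 k = cyl k 0"
  by (auto simp: A0_def cyl_def nval_def)

lemma A0_sets[measurable]: "A0 k \<in> sets NS" by (simp add: A0_cyl)

lemma nval_odo: "nval k (odometer a) = (nval k a + 1) mod 2^k"
proof (induction k)
  case 0 then show ?case by simp
next
  case (Suc k)
  have lt: "nval k a < 2^k" by (rule nval_lt)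
  have oc: "odometer a k = (a k \<noteq> (nval k a + 1 = 2^k))" unfolding odometer_coord nval_all ..
  show ?case
  proof (cases "nval k a + 1 = 2^k")
    case True
    have e: "nval k a + 2^k + 1 = 2^(Suc k)" "nval k a + 1 = 2^k" using True by auto
    show ?thesis
    proof (cases "a k")
      case True
      have "(nval k a + 2 ^ k + 1) mod 2 ^ Suc k = 0" by (simp only: e(1) mod_self)
      then show ?thesis using Suc oc e True by (simp add: nval_Suc)
    next
      case False
      then show ?thesis using Suc oc e by (simp add: nval_Suc)
    qed
  next
    case False
    then have "nval k a + 1 < 2^k" using lt by simp
    then show ?thesis using Suc oc False by (auto simp: nval_Suc)
  qed
qed

lemma nval_odo_iter: "nval k ((odometer ^^ n) a) = (nval k a + n) mod 2^k"
  by (induction n) (auto simp: nval_odo nval_lt mod_Suc_eq)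

lemma space_prod[simp]: "space (ZS \<Otimes>\<^sub>M NS) = UNIV"
  by (simp add: space_pair_measure)

definition invfin :: "((int \<Rightarrow> bool) \<times> (nat \<Rightarrow> bool)) measure \<Rightarrow> bool" where
  "invfin \<nu> \<longleftrightarrow> finite_measure \<nu> \<and> sets \<nu> = sets (ZS \<Otimes>\<^sub>M NS) \<and> distr \<nu> \<nu> SO = \<nu>"

lemma invfin_space: "invfin \<nu> \<Longrightarrow> space \<nu> = UNIV"
  unfolding invfin_def by (metis sets_eq_imp_space_eq space_prod)

lemma funpow_meas: "f \<in> M \<rightarrow>\<^sub>M M \<Longrightarrow> f ^^ n \<in> M \<rightarrow>\<^sub>M M"
  by (induction n) (auto simp: measurable_ident)

lemma shift_pow: "(shift ^^ n) x = (\<lambda>i. x (i + int n))"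
  by (induction n arbitrary: x) (auto simp: shift_def add.assoc)

lemma ishift_pow: "(ishift ^^ n) x = (\<lambda>i. x (i - int n))"
  by (induction n arbitrary: x) (auto simp: ishift_def algebra_simps)

lemma shift_ishift_pow: "(shift ^^ n) ((ishift ^^ n) x) = x"
  by (simp add: shift_pow ishift_pow)

lemma SO_pow: "(SO ^^ n) p = ((shift ^^ n) (fst p), (odometer ^^ n) (snd p))"
  by (induction n arbitrary: p) (auto simp: SO_def)

lemma invfin_SO_pres:
  assumes "invfin \<nu>" "G \<in> sets (ZS \<Otimes>\<^sub>M NS)"
  shows "emeasure \<nu> (SO -` G) = emeasure \<nu> G"
proof -
  have s: "sets \<nu> = sets (ZS \<Otimes>\<^sub>M NS)" and d: "distr \<nu> \<nu> SO = \<nu>"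
    using assms(1) by (auto simp: invfin_def)
  have m: "SO \<in> \<nu> \<rightarrow>\<^sub>M \<nu>" using measurable_cong_sets[OF s s] SO_meas by blast
  have "emeasure \<nu> G = emeasure (distr \<nu> \<nu> SO) G" using d by simp
  also have "\<dots> = emeasure \<nu> (SO -` G \<inter> space \<nu>)"
    by (rule emeasure_distr[OF m]) (simp add: s assms(2))
  finally show ?thesis using invfin_space[OF assms(1)] by simp
qed

lemma invfin_iter:
  assumes "invfin \<nu>" "G \<in> sets (ZS \<Otimes>\<^sub>M NS)"
  shows "emeasure \<nu> ((SO ^^ n) -` G) = emeasure \<nu> G"
proof (induction n)
  case 0 then show ?case by simp
next
  case (Suc n)
  have mn: "(SO ^^ n) -` G \<in> sets (ZS \<Otimes>\<^sub>M NS)"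
    using measurable_sets[OF funpow_meas[OF SO_meas, of n] assms(2)] by simp
  have "(SO ^^ Suc n) -` G = SO -` ((SO ^^ n) -` G)"
    by (simp only: funpow_Suc_right vimage_comp)
  then show ?case using invfin_SO_pres[OF assms(1) mn] Suc.IH by (simp only:)
qed

lemma UNIV_ZS[measurable]: "UNIV \<in> sets ZS" using sets.top[of ZS] by simp
lemma UNIV_NS[measurable]: "UNIV \<in> sets NS" using sets.top[of NS] by simp

lemma times_sets[measurable]: "B \<in> sets ZS \<Longrightarrow> C \<in> sets NS \<Longrightarrow> B \<times> C \<in> sets (ZS \<Otimes>\<^sub>M NS)"
  by auto

lemma Suc_mod_eq: "Suc n mod m = Suc j \<Longrightarrow> n < (m::nat) \<Longrightarrow> n = j"
  by (metis Suc_lessI mod_less mod_self nat.inject nat.simps(3))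

lemma invfin_cyl:
  assumes "invfin \<nu>" "j < 2^k"
  shows "emeasure \<nu> (UNIV \<times> cyl k j) = emeasure \<nu> (UNIV \<times> cyl k 0)"
  using assms(2)
proof (induction j)
  case 0 then show ?case by simp
next
  case (Suc j)
  have "SO -` (UNIV \<times> cyl k (Suc j)) = UNIV \<times> cyl k j"
    using Suc.prems by (auto simp: SO_def cyl_def nval_odo nval_lt intro: Suc_mod_eq)
  then have "emeasure \<nu> (UNIV \<times> cyl k j) = emeasure \<nu> (UNIV \<times> cyl k (Suc j))"
    using invfin_SO_pres[OF assms(1), of "UNIV \<times> cyl k (Suc j)"] by (simp add: times_sets)
  then show ?case using Suc by simp
qed

lemma invfin_cyl0:
  assumes "invfin \<nu>"
  shows "emeasure \<nu> UNIV = of_nat (2^k) * emeasure \<nu> (UNIV \<times> cyl k 0)"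
proof -
  have s: "sets \<nu> = sets (ZS \<Otimes>\<^sub>M NS)" using assms by (simp add: invfin_def)
  have U: "(UNIV :: ((int \<Rightarrow> bool) \<times> (nat \<Rightarrow> bool)) set) = (\<Union>j\<in>{..<2^k}. UNIV \<times> cyl k j)"
    using nval_lt by (auto simp: cyl_def)
  have "emeasure \<nu> (\<Union>j\<in>{..<2^k}. UNIV \<times> cyl k j) = (\<Sum>j\<in>{..<2^k}. emeasure \<nu> (UNIV \<times> cyl k j))"
  proof (rule sum_emeasure[symmetric])
    show "disjoint_family_on (\<lambda>j. UNIV \<times> cyl k j) {..<2 ^ k}"
      by (auto simp: disjoint_family_on_def cyl_def)
  qed (auto simp: s times_sets)
  also have "\<dots> = (\<Sum>j\<in>{..<(2::nat)^k}. emeasure \<nu> (UNIV \<times> cyl k 0))"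
    by (rule sum.cong) (auto intro: invfin_cyl[OF assms])
  also have "\<dots> = of_nat (2^k) * emeasure \<nu> (UNIV \<times> cyl k 0)" by simp
  finally show ?thesis using U by (metis (no_types, lifting))
qed

lemma ae_inv_ergodic:
  assumes erg: "ergodic M R" and E[measurable]: "E \<in> sets M"
    and n1: "(R -` E \<inter> space M) - E \<in> null_sets M" and n2: "E - (R -` E \<inter> space M) \<in> null_sets M"
  shows "emeasure M E = 0 \<or> emeasure M E = 1"
proof -
  have Rm[measurable]: "R \<in> M \<rightarrow>\<^sub>M M" and d: "distr M M R = M"
    and inv: "\<And>A. A \<in> sets M \<Longrightarrow> R -` A \<inter> space M = A \<Longrightarrow> emeasure M A = 0 \<or> emeasure M A = 1"
    using erg by (auto simp: ergodic_def)
  define En where "En n = (R^^n) -` E \<inter> space M" for n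
  have Rn: "R^^n \<in> M \<rightarrow>\<^sub>M M" for n by (rule funpow_meas[OF Rm])
  have En_sets[measurable]: "En n \<in> sets M" for n using measurable_sets[OF Rn E] En_def by simp
  have pres: "R -` H \<inter> space M \<in> null_sets M" if "H \<in> null_sets M" for H
  proof -
    have H: "H \<in> sets M" "emeasure M H = 0" using that by auto
    have "emeasure M (R -` H \<inter> space M) = emeasure (distr M M R) H"
      by (rule emeasure_distr[symmetric, OF Rm H(1)])
    moreover have "R -` H \<inter> space M \<in> sets M" by (rule measurable_sets[OF Rm H(1)])
    ultimately show ?thesis using d H by (simp add: null_sets_def)
  qed
  have RE: "R -` E \<inter> space M \<in> sets M" by (rule measurable_sets[OF Rm E])
  have EnS: "En (Suc n) = R -` En n \<inter> space M" for n
    using measurable_space[OF Rm] by (auto simp: En_def funpow_Suc_right simp del: funpow.simps)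
  have Eall: "(En n - E) \<union> (E - En n) \<in> null_sets M" for n
  proof (induction n)
    case 0
    have "En 0 = E" using sets.sets_into_space[OF E] by (auto simp: En_def)
    then show ?case by simp
  next
    case (Suc n)
    have "(En (Suc n) - E) \<union> (E - En (Suc n)) \<subseteq>
       (R -` ((En n - E) \<union> (E - En n)) \<inter> space M) \<union> ((R -` E \<inter> space M) - E) \<union> (E - (R -` E \<inter> space M))"
      using sets.sets_into_space[OF E] by (auto simp: EnS)
    moreover have "(R -` ((En n - E) \<union> (E - En n)) \<inter> space M) \<union> ((R -` E \<inter> space M) - E) \<union> (E - (R -` E \<inter> space M)) \<in> null_sets M"
      using pres[OF Suc.IH] n1 n2 by auto
    ultimately show ?case by (meson null_sets_subset sets.Un sets.Diff En_sets E)
  qed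
  define F where "F = space M \<inter> (\<Union>N. \<Inter>n. En (n + N))"
  have F_sets: "F \<in> sets M" unfolding F_def by auto
  have "R -` F \<inter> space M = F"
  proof (intro set_eqI iffI)
    fix x assume x: "x \<in> R -` F \<inter> space M"
    then obtain N where "\<forall>n. R x \<in> En (n + N)" by (auto simp: F_def)
    then have "\<forall>n. x \<in> En (n + Suc N)" using x by (auto simp: EnS)
    then show "x \<in> F" using x unfolding F_def by blast
  next
    fix x assume x: "x \<in> F"
    then obtain N where N: "\<forall>n. x \<in> En (n + N)" and xs: "x \<in> space M" unfolding F_def by blast
    then have "\<forall>n. x \<in> En (Suc (n + N))" by (metis add_Suc)
    then have "\<forall>n. R x \<in> En (n + N)" by (auto simp: EnS)
    then show "x \<in> R -` F \<inter> space M" using xs measurable_space[OF Rm xs] by (auto simp: F_def)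
  qed
  then have F01: "emeasure M F = 0 \<or> emeasure M F = 1" using inv F_sets by blast
  have U: "(\<Union>n. (En n - E) \<union> (E - En n)) \<in> null_sets M" using Eall by auto
  have "F - E \<subseteq> (\<Union>n. (En n - E) \<union> (E - En n))" by (auto simp: F_def)
  then have nFE: "F - E \<in> null_sets M" using F_sets by (intro null_sets_subset[OF U]) auto
  have "E - F \<subseteq> (\<Union>n. (En n - E) \<union> (E - En n))" 
    using sets.sets_into_space[OF E] by (auto simp: F_def)
  then have nEF: "E - F \<in> null_sets M" using F_sets by (intro null_sets_subset[OF U]) auto
  have "emeasure M E = emeasure M (E \<union> (F - E))" by (rule emeasure_Un_null_set[symmetric, OF E nFE])
  also have "E \<union> (F - E) = F \<union> (E - F)" by auto
  also have "emeasure M \<dots> = emeasure M F" by (rule emeasure_Un_null_set[OF F_sets nEF])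
  finally show ?thesis using F01 by simp
qed

lemma ergodic_extreme:
  assumes erg: "ergodic M R" and PM: "prob_space M" and PN: "prob_space N"
   and sN: "sets N = sets M" and dN: "distr N N R = N" and ac: "absolutely_continuous M N"
  shows "N = M"
proof -
  interpret M: prob_space M by fact
  interpret N: prob_space N by fact
  have Rm[measurable]: "R \<in> M \<rightarrow>\<^sub>M M" and dM: "distr M M R = M"
    using erg by (auto simp: ergodic_def)
  have RmN: "R \<in> N \<rightarrow>\<^sub>M N" using measurable_cong_sets[OF sN sN] Rm by blast
  have spN: "space N = space M" by (rule sets_eq_imp_space_eq[OF sN])
  define f where "f = RN_deriv M N"
  have fm[measurable]: "f \<in> borel_measurable M" unfolding f_def by simp
  have Nd: "density M f = N" unfolding f_def by (rule M.density_RN_deriv[OF ac sN])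
  have Nf: "emeasure N A = (\<integral>\<^sup>+ x. f x * indicator A x \<partial>M)" if "A \<in> sets M" for A
    using emeasure_density[OF fm that] Nd by simp
  define E where "E = {x\<in>space M. f x < 1}"
  have E_sets[measurable]: "E \<in> sets M" unfolding E_def by measurable
  define E' where "E' = R -` E \<inter> space M"
  have E'_sets[measurable]: "E' \<in> sets M" unfolding E'_def by (rule measurable_sets[OF Rm E_sets])
  have ME: "emeasure M E' = emeasure M E"
    using emeasure_distr[OF Rm E_sets] unfolding dM E'_def by (rule sym)
  have NE: "emeasure N E' = emeasure N E"
    using emeasure_distr[OF RmN, of E] E_sets unfolding dN E'_def spN sN by (metis)
  define P where "P = E - E'"
  define Q where "Q = E' - E"
  have P_sets[measurable]: "P \<in> sets M" and Q_sets[measurable]: "Q \<in> sets M"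
    unfolding P_def Q_def by auto
  have P_eq: "P = E - (E \<inter> E')" and Q_eq: "Q = E' - (E \<inter> E')" unfolding P_def Q_def by auto
  have "emeasure N P = emeasure N E - emeasure N (E \<inter> E')"
    unfolding P_eq by (rule emeasure_Diff) (auto simp: sN N.emeasure_finite)
  also have "\<dots> = emeasure N E' - emeasure N (E \<inter> E')" using NE by simp
  also have "\<dots> = emeasure N Q"
    unfolding Q_eq by (rule emeasure_Diff[symmetric]) (auto simp: sN N.emeasure_finite)
  finally have NPQ: "emeasure N P = emeasure N Q" .
  have "emeasure M P = emeasure M E - emeasure M (E \<inter> E')"
    unfolding P_eq by (rule emeasure_Diff) (auto simp: M.emeasure_finite)
  also have "\<dots> = emeasure M E' - emeasure M (E \<inter> E')" using ME by simp
  also have "\<dots> = emeasure M Q"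
    unfolding Q_eq by (rule emeasure_Diff[symmetric]) (auto simp: M.emeasure_finite)
  finally have MPQ: "emeasure M P = emeasure M Q" .
  have NPle: "emeasure N P \<le> emeasure M P"
  proof -
    have "emeasure N P = (\<integral>\<^sup>+ x. f x * indicator P x \<partial>M)" by (rule Nf[OF P_sets])
    also have "\<dots> \<le> (\<integral>\<^sup>+ x. indicator P x \<partial>M)"
      by (rule nn_integral_mono) (auto simp: indicator_def P_def E_def)
    finally show ?thesis by simp
  qed
  have NQge: "emeasure M Q \<le> emeasure N Q"
  proof -
    have "emeasure M Q = (\<integral>\<^sup>+ x. indicator Q x \<partial>M)" by simp
    also have "\<dots> \<le> (\<integral>\<^sup>+ x. f x * indicator Q x \<partial>M)"
      by (rule nn_integral_mono) (auto simp: indicator_def Q_def E_def E'_def not_less)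
    finally show ?thesis using Nf[OF Q_sets] by simp
  qed
  have NPM: "emeasure N P = emeasure M P"
    using NPle NQge NPQ MPQ by (metis antisym)
  have "(\<integral>\<^sup>+ x. indicator P x - f x * indicator P x \<partial>M)
      = (\<integral>\<^sup>+ x. indicator P x \<partial>M) - (\<integral>\<^sup>+ x. f x * indicator P x \<partial>M)"
  proof (rule nn_integral_diff)
    show "(\<integral>\<^sup>+ x. f x * indicator P x \<partial>M) \<noteq> \<infinity>" using Nf[OF P_sets] N.emeasure_finite[of P] by (metis infinity_ennreal_def)
    show "AE x in M. f x * indicator P x \<le> indicator P x"
      by (auto simp: indicator_def P_def E_def)
  qed auto
  also have "\<dots> = 0" using NPM Nf[OF P_sets] by simp
  finally have "AE x in M. indicator P x - f x * indicator P x = (0::ennreal)"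
    by (subst nn_integral_0_iff_AE[symmetric]) auto
  then have "AE x in M. x \<notin> P"
    by (rule AE_mp) (auto simp: indicator_def P_def E_def diff_eq_0_iff_ennreal)
  then have Pn: "P \<in> null_sets M" by (simp add: AE_iff_null_sets)
  then have Qn: "Q \<in> null_sets M" using MPQ by (simp add: null_sets_def)
  have E01: "emeasure M E = 0 \<or> emeasure M E = 1"
    using ae_inv_ergodic[OF erg E_sets] Pn Qn by (simp add: P_def Q_def E'_def)
  have intf: "(\<integral>\<^sup>+ x. f x \<partial>M) = 1"
  proof -
    have "(\<integral>\<^sup>+ x. f x \<partial>M) = (\<integral>\<^sup>+ x. f x * indicator (space M) x \<partial>M)"
      by (rule nn_integral_cong) auto
    also have "\<dots> = emeasure N (space M)" using Nf[of "space M"] by simp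
    finally show ?thesis using N.emeasure_space_1 spN by simp
  qed
  have int1: "(\<integral>\<^sup>+ x. 1 \<partial>M) = 1" using M.emeasure_space_1 by simp
  show ?thesis
  proof (cases "emeasure M E = 0")
    case True
    then have "E \<in> null_sets M" using E_sets by (simp add: null_sets_def)
    then have "AE x in M. x \<notin> E" using AE_iff_null_sets E_sets by blast
    then have ge: "AE x in M. 1 \<le> f x" by (rule AE_mp) (auto simp: E_def not_less)
    have "(\<integral>\<^sup>+ x. f x - 1 \<partial>M) = (\<integral>\<^sup>+ x. f x \<partial>M) - (\<integral>\<^sup>+ x. 1 \<partial>M)"
      by (rule nn_integral_diff) (use ge int1 in auto)
    also have "\<dots> = 0" using intf int1 by simp
    finally have "AE x in M. f x - 1 = (0::ennreal)"
      by (subst nn_integral_0_iff_AE[symmetric]) auto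
    then have "AE x in M. f x = 1" using ge by eventually_elim (auto simp: diff_eq_0_iff_ennreal)
    then have "density M f = density M (\<lambda>_. 1)" by (intro density_cong) auto
    then show ?thesis using Nd density_1 by metis
  next
    case False
    then have E1: "emeasure M E = 1" using E01 by simp
    have "emeasure M (space M - E) = 0" using M.prob_compl[OF E_sets] E1
      by (simp add: M.emeasure_eq_measure)
    then have "AE x in M. x \<in> E" using AE_iff_measurable[of "space M - E" M "\<lambda>x. x \<in> E"]
      by auto
    then have lt: "AE x in M. f x < 1" by (rule AE_mp) (auto simp: E_def)
    have "(\<integral>\<^sup>+ x. 1 - f x \<partial>M) = (\<integral>\<^sup>+ x. 1 \<partial>M) - (\<integral>\<^sup>+ x. f x \<partial>M)"
      by (rule nn_integral_diff) (use lt intf in \<open>auto elim: AE_mp\<close>)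
    also have "\<dots> = 0" using intf int1 by simp
    finally have "AE x in M. 1 - f x = (0::ennreal)"
      by (subst nn_integral_0_iff_AE[symmetric]) auto
    then have "AE x in M. False" using lt by eventually_elim (auto simp: diff_eq_0_iff_ennreal)
    then show ?thesis using M.AE_False by simp
  qed
qed

lemma theta_sets[simp]: "sets (theta k \<nu>) = sets ZS"
  by (simp add: theta_def)
lemma theta_space[simp]: "space (theta k \<nu>) = UNIV"
  using sets_eq_imp_space_eq[OF theta_sets] by simp

lemma invfin_sets: "invfin \<nu> \<Longrightarrow> sets \<nu> = sets (ZS \<Otimes>\<^sub>M NS)"
  by (simp add: invfin_def)

lemma invfin_fin: "invfin \<nu> \<Longrightarrow> emeasure \<nu> A \<noteq> \<infinity>"
  unfolding invfin_def using finite_measure.emeasure_finite by auto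

lemma theta_em:
  assumes nu: "invfin \<nu>" and B: "B \<in> sets ZS"
  shows "emeasure (theta k \<nu>) B = 1 / emeasure \<nu> (UNIV \<times> A0 k) * emeasure \<nu> (B \<times> A0 k)"
proof -
  have s: "sets \<nu> = sets (ZS \<Otimes>\<^sub>M NS)" using nu by (simp add: invfin_def)
  have S: "UNIV \<times> A0 k \<in> sets \<nu>" using s by simp
  have fm: "fst \<in> density \<nu> (indicator (UNIV \<times> A0 k)) \<rightarrow>\<^sub>M ZS"
    using measurable_cong_sets[of "density \<nu> (indicator (UNIV \<times> A0 k))" "ZS \<Otimes>\<^sub>M NS" ZS ZS] s
    by simp
  have sp: "space (density \<nu> (indicator (UNIV \<times> A0 k))) = UNIV"
    using invfin_space[OF nu] by simp
  have "emeasure (distr (density \<nu> (indicator (UNIV \<times> A0 k))) ZS fst) B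
      = emeasure (density \<nu> (indicator (UNIV \<times> A0 k))) (fst -` B \<inter> UNIV)"
    using emeasure_distr[OF fm B] sp by simp
  also have "fst -` B \<inter> UNIV = B \<times> (UNIV :: (nat \<Rightarrow> bool) set)" by auto
  also have "emeasure (density \<nu> (indicator (UNIV \<times> A0 k))) (B \<times> UNIV) = emeasure \<nu> ((UNIV \<times> A0 k) \<inter> (B \<times> UNIV))"
    by (rule emeasure_restricted[OF S]) (simp add: s B)
  also have "(UNIV \<times> A0 k) \<inter> (B \<times> UNIV) = B \<times> A0 k" by auto
  finally show ?thesis by (simp add: theta_def)
qed

lemma invfin_c:
  assumes "invfin \<nu>"
  shows "emeasure \<nu> UNIV = of_nat (2^k) * emeasure \<nu> (UNIV \<times> A0 k)"
  using invfin_cyl0[OF assms] by (simp add: A0_cyl)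

lemma theta_prob:
  assumes nu: "invfin \<nu>" and nz: "emeasure \<nu> UNIV \<noteq> 0"
  shows "prob_space (theta k \<nu>)"
proof
  define c where "c = emeasure \<nu> (UNIV \<times> A0 k)"
  have c0: "c \<noteq> 0" using invfin_c[OF nu, of k] nz by (auto simp: c_def)
  have cinf: "c \<noteq> \<infinity>" using invfin_fin[OF nu] by (simp add: c_def)
  have "emeasure (theta k \<nu>) UNIV = 1 / c * c" using theta_em[OF nu, of UNIV k] by (simp add: c_def)
  also have "\<dots> = 1" using c0 cinf by (simp add: ennreal_divide_times top.not_eq_extremum)
  finally show "emeasure (theta k \<nu>) (space (theta k \<nu>)) = 1" by simp
qed

lemma shift_pow_meas[measurable]: "shift ^^ n \<in> ZS \<rightarrow>\<^sub>M ZS"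
  by (rule funpow_meas[OF shift_meas])

lemma theta_inv:
  assumes nu: "invfin \<nu>"
  shows "distr (theta k \<nu>) (theta k \<nu>) (shift ^^ (2^k)) = theta k \<nu>"
proof (rule measure_eqI)
  have m: "shift ^^ (2^k) \<in> theta k \<nu> \<rightarrow>\<^sub>M theta k \<nu>"
    using measurable_cong_sets[of "theta k \<nu>" ZS "theta k \<nu>" ZS] by simp
  show "sets (distr (theta k \<nu>) (theta k \<nu>) (shift ^^ (2^k))) = sets (theta k \<nu>)" by simp
  fix B assume "B \<in> sets (distr (theta k \<nu>) (theta k \<nu>) (shift ^^ (2^k)))"
  then have B: "B \<in> sets ZS" by simp
  have B': "(shift ^^ (2^k)) -` B \<in> sets ZS"
    using measurable_sets[OF shift_pow_meas B] by simp
  have eq: "(shift ^^ (2^k)) -` B \<times> A0 k = (SO ^^ (2^k)) -` (B \<times> A0 k)"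
    by (auto simp: SO_pow A0_cyl cyl_def nval_odo_iter nval_lt)
  have "emeasure (distr (theta k \<nu>) (theta k \<nu>) (shift ^^ (2^k))) B = emeasure (theta k \<nu>) ((shift ^^ (2^k)) -` B)"
    using emeasure_distr[OF m, of B] B by simp
  also have "\<dots> = 1 / emeasure \<nu> (UNIV \<times> A0 k) * emeasure \<nu> ((SO ^^ (2^k)) -` (B \<times> A0 k))"
    using theta_em[OF nu B'] eq by simp
  also have "\<dots> = 1 / emeasure \<nu> (UNIV \<times> A0 k) * emeasure \<nu> (B \<times> A0 k)"
    using invfin_iter[OF nu, of "B \<times> A0 k"] B by simp
  also have "\<dots> = emeasure (theta k \<nu>) B" using theta_em[OF nu B] by simp
  finally show "emeasure (distr (theta k \<nu>) (theta k \<nu>) (shift ^^ (2^k))) B = emeasure (theta k \<nu>) B" .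
qed

lemma theta_erg_iff:
  assumes nu: "invfin \<nu>"
  shows "ergodic (theta k \<nu>) (shift ^^ (2^k)) \<longleftrightarrow>
     (\<forall>B\<in>sets ZS. (shift ^^ (2^k)) -` B = B \<longrightarrow> emeasure (theta k \<nu>) B = 0 \<or> emeasure (theta k \<nu>) B = 1)"
proof -
  have m: "shift ^^ (2^k) \<in> theta k \<nu> \<rightarrow>\<^sub>M theta k \<nu>"
    using measurable_cong_sets[of "theta k \<nu>" ZS "theta k \<nu>" ZS] by simp
  show ?thesis unfolding ergodic_def using m theta_inv[OF nu] by simp
qed

lemma ennreal_cancel: "(a::ennreal) \<noteq> 0 \<Longrightarrow> a \<noteq> \<infinity> \<Longrightarrow> a * b = a * c \<Longrightarrow> b = c"
proof -
  assume a: "a \<noteq> 0" "a \<noteq> \<infinity>" and e: "a * b = a * c"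
  have "b = (b * a) / a" using a by (simp add: mult_divide_eq_ennreal)
  also have "\<dots> = (c * a) / a" using e by (simp add: mult.commute)
  also have "\<dots> = c" using a by (simp add: mult_divide_eq_ennreal)
  finally show ?thesis .
qed

lemma c_props:
  assumes nu: "invfin \<nu>" and nz: "emeasure \<nu> UNIV \<noteq> 0"
  shows "emeasure \<nu> (UNIV \<times> A0 k) \<noteq> 0" "emeasure \<nu> (UNIV \<times> A0 k) \<noteq> \<infinity>"
  using invfin_c[OF nu, of k] nz invfin_fin[OF nu] by auto

lemma theta_em':
  assumes nu: "invfin \<nu>" and nz: "emeasure \<nu> UNIV \<noteq> 0" and B: "B \<in> sets ZS"
  shows "emeasure \<nu> (B \<times> A0 k) = emeasure \<nu> (UNIV \<times> A0 k) * emeasure (theta k \<nu>) B"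
proof -
  define c where "c = emeasure \<nu> (UNIV \<times> A0 k)"
  have c: "c \<noteq> 0" "c \<noteq> \<infinity>" using c_props[OF nu nz] by (auto simp: c_def)
  have "c * emeasure (theta k \<nu>) B = c * (1 / c * emeasure \<nu> (B \<times> A0 k))"
    using theta_em[OF nu B] by (simp add: c_def)
  also have "\<dots> = (c * 1 / c) * emeasure \<nu> (B \<times> A0 k)" by (simp only: mult.assoc[symmetric] ennreal_times_divide)
  also have "c * 1 / c = 1" using c by (simp add: top.not_eq_extremum)
  finally show ?thesis by (simp add: c_def)
qed

lemma inv_invfin: "\<nu> \<in> inv_measures \<Longrightarrow> invfin \<nu>"
  unfolding inv_measures_def invfin_def by (auto simp: prob_space_def)

lemma inv_one: "\<nu> \<in> inv_measures \<Longrightarrow> emeasure \<nu> UNIV = 1"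
  using inv_invfin[of \<nu>] invfin_space[of \<nu>] prob_space.emeasure_space_1[of \<nu>]
  unfolding inv_measures_def by auto

lemma ishift_shift_pow: "(ishift ^^ n) ((shift ^^ n) x) = x"
  by (simp add: shift_pow ishift_pow)

lemma SO_pow_meas: "SO ^^ n \<in> ZS \<Otimes>\<^sub>M NS \<rightarrow>\<^sub>M ZS \<Otimes>\<^sub>M NS"
  by (rule funpow_meas[OF SO_meas])

lemma SO_pow_pre: "(SO ^^ n) -` (B \<times> C) = (shift ^^ n) -` B \<times> (odometer ^^ n) -` C"
  by (auto simp: SO_pow)

lemma odo_pre_A0:
  assumes "m \<le> 2^k" "0 < m"
  shows "(odometer ^^ m) -` A0 k = cyl k (2^k - m)"
proof -
  have "(nval k y + m) mod 2^k = 0 \<longleftrightarrow> nval k y = 2^k - m" for y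
  proof -
    have lt: "nval k y < 2^k" by (rule nval_lt)
    have "(nval k y + m) mod 2^k = 0 \<longleftrightarrow> 2^k dvd (nval k y + m)" by (simp add: dvd_eq_mod_eq_0)
    also have "\<dots> \<longleftrightarrow> nval k y + m = 2^k"
    proof
      assume d: "2^k dvd (nval k y + m)"
      have "0 < nval k y + m" "nval k y + m < 2 * 2^k" using assms lt by auto
      then show "nval k y + m = 2^k" using d
      proof -
        obtain q where q: "nval k y + m = 2^k * q" using d by (auto elim: dvdE)
        have "q < 2" using q \<open>nval k y + m < 2 * 2^k\<close> by (metis mult.commute mult_less_cancel1)
        moreover have "q \<noteq> 0" using q \<open>0 < nval k y + m\<close> by auto
        ultimately have "q = 1" by linarith
        then show ?thesis using q by simp
      qed
    qed simp
    finally show ?thesis using assms by auto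
  qed
  then show ?thesis by (auto simp: A0_cyl cyl_def nval_odo_iter)
qed

lemma dir12:
  assumes nu: "\<nu> \<in> inv_measures" and erg: "ergodic \<nu> SO"
  shows "ergodic (theta k \<nu>) (shift ^^ (2^k))"
proof -
  have nf: "invfin \<nu>" by (rule inv_invfin[OF nu])
  have one: "emeasure \<nu> UNIV = 1" by (rule inv_one[OF nu])
  have s: "sets \<nu> = sets (ZS \<Otimes>\<^sub>M NS)" by (rule invfin_sets[OF nf])
  have sp: "space \<nu> = UNIV" by (rule invfin_space[OF nf])
  define K :: nat where "K = 2^k"
  have Kpos: "0 < K" by (simp add: K_def)
  show ?thesis unfolding theta_erg_iff[OF nf]
  proof (intro ballI impI)
    fix B assume B: "B \<in> sets ZS" and Binv: "(shift ^^ (2^k)) -` B = B"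
    have Binv': "(shift ^^ K) z \<in> B \<longleftrightarrow> z \<in> B" for z
      using Binv unfolding K_def by blast
    define G where "G j = (SO ^^ (K - j)) -` (B \<times> A0 k)" for j
    define A where "A = (\<Union>j\<in>{..<K}. G j)"
    have G_sets: "G j \<in> sets (ZS \<Otimes>\<^sub>M NS)" for j
      using measurable_sets[OF SO_pow_meas, of "B \<times> A0 k"] B by (simp add: G_def)
    have G_eq: "G j = (shift ^^ (K - j)) -` B \<times> cyl k j" if "j < K" for j
      using odo_pre_A0[of "K - j" k] that by (auto simp: G_def SO_pow_pre K_def)
    have A_char: "(x, y) \<in> A \<longleftrightarrow> (shift ^^ (K - nval k y)) x \<in> B" for x y
    proof -
      have "nval k y < K" using nval_lt by (simp add: K_def)
      then show ?thesis by (auto simp: A_def G_eq cyl_def)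
    qed
    have A_sets: "A \<in> sets (ZS \<Otimes>\<^sub>M NS)" unfolding A_def using G_sets by auto
    have A_inv: "SO -` A \<inter> space \<nu> = A"
    proof (intro set_eqI)
      fix p :: "(int \<Rightarrow> bool) \<times> (nat \<Rightarrow> bool)"
      obtain x y where p: "p = (x, y)" by (cases p)
      have lt: "nval k y < K" using nval_lt by (simp add: K_def)
      have "SO p \<in> A \<longleftrightarrow> (shift ^^ (K - nval k (odometer y))) (shift x) \<in> B"
        by (simp add: p SO_def A_char)
      also have "\<dots> \<longleftrightarrow> (shift ^^ (K - nval k y)) x \<in> B"
      proof (cases "nval k y + 1 < K")
        case True
        then have "nval k (odometer y) = nval k y + 1" by (simp add: nval_odo K_def)
        moreover have "(shift ^^ (K - (nval k y + 1))) (shift x) = (shift ^^ (K - nval k y)) x"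
          using True by (simp add: shift_pow shift_def algebra_simps of_nat_diff)
        ultimately show ?thesis by simp
      next
        case False
        then have e: "nval k y + 1 = K" using lt by simp
        then have "nval k (odometer y) = 0" by (simp add: nval_odo K_def)
        moreover have "K - nval k y = 1" using e by simp
        then have "(shift ^^ K) (shift x) = (shift ^^ K) ((shift ^^ (K - nval k y)) x)"
          by (simp add: shift_pow shift_def algebra_simps)
        ultimately show ?thesis using Binv'[of "(shift ^^ (K - nval k y)) x"] by simp
      qed
      finally show "p \<in> SO -` A \<inter> space \<nu> \<longleftrightarrow> p \<in> A" by (simp add: sp p A_char)
    qed
    have A01: "emeasure \<nu> A = 0 \<or> emeasure \<nu> A = 1"
      using erg A_sets A_inv s unfolding ergodic_def by auto
    have "emeasure \<nu> A = (\<Sum>j\<in>{..<K}. emeasure \<nu> (G j))"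
      unfolding A_def
    proof (rule sum_emeasure[symmetric])
      show "disjoint_family_on G {..<K}"
        by (auto simp: disjoint_family_on_def G_eq cyl_def)
    qed (use G_sets s in auto)
    also have "\<dots> = (\<Sum>j\<in>{..<K}. emeasure \<nu> (B \<times> A0 k))"
      by (rule sum.cong) (auto simp: G_def invfin_iter[OF nf] B)
    also have "\<dots> = of_nat K * emeasure \<nu> (B \<times> A0 k)" by simp
    also have "\<dots> = of_nat K * emeasure \<nu> (UNIV \<times> A0 k) * emeasure (theta k \<nu>) B"
      using theta_em'[OF nf _ B, of k] one by (simp add: mult.assoc)
    also have "of_nat K * emeasure \<nu> (UNIV \<times> A0 k) = 1"
      using invfin_c[OF nf, of k] one by (simp add: K_def)
    finally show "emeasure (theta k \<nu>) B = 0 \<or> emeasure (theta k \<nu>) B = 1" using A01 by simp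
  qed
qed

lemma nval_mod: "nval (k + d) a mod 2^k = nval k a"
proof (induction d)
  case 0 then show ?case using nval_lt[of k a] by simp
next
  case (Suc d)
  have "nval (k + Suc d) a = nval (k + d) a + (if a (k + d) then 2^k * 2^d else 0)"
    by (simp add: nval_Suc power_add)
  then show ?case using Suc by simp
qed

lemma cyl_int: "k \<le> k' \<Longrightarrow> cyl k i \<inter> cyl k' i' = (if i' mod 2^k = i then cyl k' i' else {})"
  using nval_mod[of k "k' - k"] by (auto simp: cyl_def)

lemma cyl00: "cyl 0 0 = UNIV" by (simp add: cyl_def)

lemma PiE_UNIV_UNIV: "(\<Pi>\<^sub>E i\<in>UNIV. UNIV) = UNIV"
  by auto

lemma NS_gen: "sets NS = sigma_sets UNIV (range (\<lambda>(k, i). cyl k i))"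
proof -
  have "sets NS = sigma_sets UNIV {{f \<in> UNIV. f i \<in> A} | i A. i \<in> (UNIV::nat set) \<and> A \<in> sets (count_space (UNIV::bool set))}"
    unfolding NS_def sets_PiM_single by (simp add: PiE_UNIV_UNIV)
  also have "\<dots> = sigma_sets UNIV (range (\<lambda>(k, i). cyl k i))"
  proof (rule sigma_sets_eqI)
    fix X assume "X \<in> {{f \<in> UNIV. f i \<in> A} | i A. i \<in> (UNIV::nat set) \<and> A \<in> sets (count_space (UNIV::bool set))}"
    then obtain i A where X: "X = {f. f i \<in> A}" by auto
    define T where "T = {f :: nat \<Rightarrow> bool. f i}"
    have Teq: "T = (\<Union>j. cyl (Suc i) (2^i + j))"
      using nval_lt[of i] by (auto simp: T_def cyl_def nval_Suc intro: exI[of _ 0]) (metis le_add1 leD nval_lt)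
    have Tc: "cyl (Suc i) (2^i + j) \<in> sigma_sets UNIV (range (\<lambda>(k, i). cyl k i))" for j
      by (rule sigma_sets.Basic) (rule image_eqI[where x="(Suc i, 2^i + j)"], auto)
    have T: "T \<in> sigma_sets UNIV (range (\<lambda>(k, i). cyl k i))"
      unfolding Teq by (rule sigma_sets.Union[OF Tc])
    have TC: "UNIV - T \<in> sigma_sets UNIV (range (\<lambda>(k, i). cyl k i))"
      using sigma_sets.Compl[OF T] by simp
    have "X = (if True \<in> A then T else {}) \<union> (if False \<in> A then UNIV - T else {})"
      by (auto simp: X T_def) (metis (full_types))+
    then show "X \<in> sigma_sets UNIV (range (\<lambda>(k, i). cyl k i))"
      using T TC sigma_sets_Un[OF T TC] by (auto intro!: sigma_sets_Un sigma_sets.Empty)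
  next
    fix X assume "X \<in> range (\<lambda>(k, i). cyl k i)"
    then obtain k i where "X = cyl k i" by auto
    then have "X \<in> sets NS" by simp
    then show "X \<in> sigma_sets UNIV {{f \<in> UNIV. f i \<in> A} | i A. i \<in> (UNIV::nat set) \<and> A \<in> sets (count_space (UNIV::bool set))}"
      unfolding NS_def sets_PiM_single by (simp add: PiE_UNIV_UNIV)
  qed
  finally show ?thesis .
qed

definition Egen :: "((int \<Rightarrow> bool) \<times> (nat \<Rightarrow> bool)) set set" where
  "Egen = {a \<times> b | a b. a \<in> sets ZS \<and> b \<in> range (\<lambda>(k, i). cyl k i)}"

lemma prod_gen: "sets (ZS \<Otimes>\<^sub>M NS) = sigma_sets UNIV Egen"
proof -
  have "sets (ZS \<Otimes>\<^sub>M NS) = sets (sigma (space ZS \<times> space NS) Egen)"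
    unfolding Egen_def
  proof (rule sets_pair_eq)
    show "sets ZS \<subseteq> Pow (space ZS)" by (rule sets.space_closed)
    show "sets ZS = sigma_sets (space ZS) (sets ZS)" using sets.sigma_sets_eq[of ZS] by simp
    show "countable {UNIV}" "{UNIV} \<subseteq> sets ZS" "\<Union>{UNIV} = space ZS" by auto
    show "range (\<lambda>(k, i). cyl k i) \<subseteq> Pow (space NS)" by auto
    show "sets NS = sigma_sets (space NS) (range (\<lambda>(k, i). cyl k i))" using NS_gen by simp
    show "countable {cyl 0 0}" "\<Union>{cyl 0 0} = space NS"
      by (auto simp: cyl00)
    show "{cyl 0 0} \<subseteq> range (\<lambda>(k, i). cyl k i)"
      by (auto intro: image_eqI[where x="(0, 0)"])
  qed
  also have "\<dots> = sigma_sets UNIV Egen"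
    by (subst sets_measure_of) auto
  finally show ?thesis by simp
qed

lemma Egen_stable: "Int_stable Egen"
proof (rule Int_stableI)
  fix X Y assume "X \<in> Egen" "Y \<in> Egen"
  then obtain a b k i a' k' i' where X: "X = a \<times> cyl k i" and Y: "Y = a' \<times> cyl k' i'"
    and a: "a \<in> sets ZS" "a' \<in> sets ZS" by (auto simp: Egen_def)
  have aa: "a \<inter> a' \<in> sets ZS" using a by auto
  have XY: "X \<inter> Y = (a \<inter> a') \<times> (cyl k i \<inter> cyl k' i')" by (auto simp: X Y)
  have "cyl k i \<inter> cyl k' i' = {} \<or> cyl k i \<inter> cyl k' i' \<in> range (\<lambda>(k, i). cyl k i)"
  proof (cases "k \<le> k'")
    case True then show ?thesis using cyl_int[OF True, of i i'] by auto
  next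
    case False then have "k' \<le> k" by simp
    then show ?thesis using cyl_int[of k' k i' i] by (auto simp: Int_commute)
  qed
  then show "X \<inter> Y \<in> Egen"
  proof
    assume "cyl k i \<inter> cyl k' i' = {}"
    then have "X \<inter> Y = {} \<times> cyl 0 0" using XY by simp
    then show ?thesis unfolding Egen_def by blast
  next
    assume "cyl k i \<inter> cyl k' i' \<in> range (\<lambda>(k, i). cyl k i)"
    then obtain kk ii where "cyl k i \<inter> cyl k' i' = cyl kk ii" by auto
    then show ?thesis using XY aa unfolding Egen_def by auto
  qed
qed

lemma ishift_pow_meas: "ishift ^^ n \<in> ZS \<rightarrow>\<^sub>M ZS"
  by (rule funpow_meas[OF ishift_meas])

lemma invfin_uniq:
  assumes n1: "invfin \<nu>1" and n2: "invfin \<nu>2" and eqU: "emeasure \<nu>1 UNIV = emeasure \<nu>2 UNIV"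
    and nz: "emeasure \<nu>1 UNIV \<noteq> 0" and th: "\<And>k. theta k \<nu>1 = theta k \<nu>2"
  shows "\<nu>1 = \<nu>2"
proof (rule measure_eqI_generator_eq[OF Egen_stable, of UNIV _ _ "\<lambda>_. UNIV"])
  show "Egen \<subseteq> Pow UNIV" by simp
  show "sets \<nu>1 = sigma_sets UNIV Egen" using invfin_sets[OF n1] prod_gen by simp
  show "sets \<nu>2 = sigma_sets UNIV Egen" using invfin_sets[OF n2] prod_gen by simp
  show "range (\<lambda>_. UNIV) \<subseteq> Egen"
    unfolding Egen_def using cyl00
    by (auto intro!: exI[of _ UNIV] exI[of _ "cyl 0 0"] image_eqI[where x="(0,0)"])
  show "(\<Union>i. UNIV) = UNIV" by simp
  show "emeasure \<nu>1 UNIV \<noteq> \<infinity>" for i :: nat using invfin_fin[OF n1] by simp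
  have nz2: "emeasure \<nu>2 UNIV \<noteq> 0" using nz eqU by simp
  fix X assume "X \<in> Egen"
  then obtain B k i where X: "X = B \<times> cyl k i" and B: "B \<in> sets ZS" by (auto simp: Egen_def)
  show "emeasure \<nu>1 X = emeasure \<nu>2 X"
  proof (cases "i < 2^k")
    case False
    then have "cyl k i = {}" using nval_lt[of k] by (auto simp: cyl_def)
    then show ?thesis by (simp add: X)
  next
    case True
    define m where "m = 2^k - i"
    have m: "m \<le> 2^k" "0 < m" "2^k - m = i" using True by (auto simp: m_def)
    define B0 where "B0 = (ishift ^^ m) -` B"
    have B0: "B0 \<in> sets ZS" using measurable_sets[OF ishift_pow_meas B] by (simp add: B0_def)
    have pre: "(SO ^^ m) -` (B0 \<times> A0 k) = X"
      using odo_pre_A0[OF m(1,2)] m(3) by (auto simp: SO_pow_pre X B0_def ishift_shift_pow)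
    have c: "emeasure \<nu>1 (UNIV \<times> A0 k) = emeasure \<nu>2 (UNIV \<times> A0 k)"
    proof (rule ennreal_cancel[of "of_nat (2^k)"])
      show "of_nat (2^k) * emeasure \<nu>1 (UNIV \<times> A0 k) = of_nat (2^k) * emeasure \<nu>2 (UNIV \<times> A0 k)"
        using invfin_c[OF n1, of k] invfin_c[OF n2, of k] eqU by simp
      show "of_nat (2^k) \<noteq> (\<infinity>::ennreal)" using ennreal_of_nat_neq_top[of "2^k"] by (metis infinity_ennreal_def)
    qed auto
    have "emeasure \<nu>1 X = emeasure \<nu>1 (B0 \<times> A0 k)"
      using invfin_iter[OF n1, of "B0 \<times> A0 k" m] B0 pre by simp
    also have "\<dots> = emeasure \<nu>1 (UNIV \<times> A0 k) * emeasure (theta k \<nu>1) B0"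
      by (rule theta_em'[OF n1 nz B0])
    also have "\<dots> = emeasure \<nu>2 (UNIV \<times> A0 k) * emeasure (theta k \<nu>2) B0"
      using c th by simp
    also have "\<dots> = emeasure \<nu>2 (B0 \<times> A0 k)"
      by (rule theta_em'[OF n2 nz2 B0, symmetric])
    also have "\<dots> = emeasure \<nu>2 X"
      using invfin_iter[OF n2, of "B0 \<times> A0 k" m] B0 pre by simp
    finally show ?thesis .
  qed
qed

lemma theta_eq_dom:
  assumes nu: "\<nu> \<in> inv_measures" and erg: "ergodic (theta k \<nu>) (shift ^^ (2^k))"
    and n': "invfin \<nu>'" and nz': "emeasure \<nu>' UNIV \<noteq> 0"
    and dom: "\<And>G. G \<in> sets (ZS \<Otimes>\<^sub>M NS) \<Longrightarrow> emeasure \<nu> G = 0 \<Longrightarrow> emeasure \<nu>' G = 0"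
  shows "theta k \<nu>' = theta k \<nu>"
proof (rule ergodic_extreme[OF erg])
  have nf: "invfin \<nu>" by (rule inv_invfin[OF nu])
  have nz: "emeasure \<nu> UNIV \<noteq> 0" using inv_one[OF nu] by simp
  show "prob_space (theta k \<nu>)" by (rule theta_prob[OF nf nz])
  show "prob_space (theta k \<nu>')" by (rule theta_prob[OF n' nz'])
  show "sets (theta k \<nu>') = sets (theta k \<nu>)" by simp
  show "distr (theta k \<nu>') (theta k \<nu>') (shift ^^ (2^k)) = theta k \<nu>'" by (rule theta_inv[OF n'])
  show "absolutely_continuous (theta k \<nu>) (theta k \<nu>')"
    unfolding absolutely_continuous_def
  proof
    fix B assume "B \<in> null_sets (theta k \<nu>)"
    then have B: "B \<in> sets ZS" and B0: "emeasure (theta k \<nu>) B = 0" by auto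
    have "emeasure \<nu> (B \<times> A0 k) = 0" using theta_em'[OF nf nz B, of k] B0 by simp
    then have "emeasure \<nu>' (B \<times> A0 k) = 0" using dom B by simp
    then have "emeasure (theta k \<nu>') B = 0" using theta_em[OF n' B, of k] by simp
    then show "B \<in> null_sets (theta k \<nu>')" using B by auto
  qed
qed

lemma step_down:
  assumes nu: "\<nu> \<in> inv_measures" and erg: "ergodic (theta (Suc k) \<nu>) (shift ^^ (2^Suc k))"
  shows "ergodic (theta k \<nu>) (shift ^^ (2^k))"
proof -
  have nf: "invfin \<nu>" by (rule inv_invfin[OF nu])
  have nz: "emeasure \<nu> UNIV \<noteq> 0" using inv_one[OF nu] by simp
  have s: "sets \<nu> = sets (ZS \<Otimes>\<^sub>M NS)" by (rule invfin_sets[OF nf])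
  show ?thesis unfolding theta_erg_iff[OF nf]
  proof (intro ballI impI)
    fix B assume B: "B \<in> sets ZS" and Binv: "(shift ^^ (2^k)) -` B = B"
    have "(shift ^^ (2^Suc k)) -` B = (shift ^^ (2^k)) -` ((shift ^^ (2^k)) -` B)"
      by (simp add: funpow_add mult_2 vimage_comp)
    then have Binv2: "(shift ^^ (2^Suc k)) -` B = B" using Binv by simp
    have E1: "emeasure (theta (Suc k) \<nu>) B = 0 \<or> emeasure (theta (Suc k) \<nu>) B = 1"
      using erg B Binv2 unfolding theta_erg_iff[OF nf] by blast
    have split: "A0 k = cyl (Suc k) 0 \<union> cyl (Suc k) (2^k)"
      using nval_lt[of k] by (auto simp: A0_cyl cyl_def nval_Suc) (metis less_not_refl nval_lt)
    have pre: "(SO ^^ (2^k)) -` (B \<times> A0 (Suc k)) = B \<times> cyl (Suc k) (2^k)"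
      using odo_pre_A0[of "2^k" "Suc k"] Binv by (simp add: SO_pow_pre)
    have dbl: "emeasure \<nu> (C \<times> A0 k) = 2 * emeasure \<nu> (C \<times> A0 (Suc k))"
      if C: "C \<in> sets ZS" and Cinv: "(shift ^^ (2^k)) -` C = C" for C
    proof -
      have pre: "(SO ^^ (2^k)) -` (C \<times> A0 (Suc k)) = C \<times> cyl (Suc k) (2^k)"
        using odo_pre_A0[of "2^k" "Suc k"] Cinv by (simp add: SO_pow_pre)
      have "C \<times> A0 k = (C \<times> A0 (Suc k)) \<union> (C \<times> cyl (Suc k) (2^k))"
        using split by (auto simp: A0_cyl)
      moreover have disj: "(C \<times> A0 (Suc k)) \<inter> (C \<times> cyl (Suc k) (2^k)) = {}"
        by (auto simp: A0_cyl cyl_def)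
      moreover have "emeasure \<nu> (C \<times> A0 (Suc k)) + emeasure \<nu> (C \<times> cyl (Suc k) (2^k))
          = emeasure \<nu> ((C \<times> A0 (Suc k)) \<union> (C \<times> cyl (Suc k) (2^k)))"
        by (rule plus_emeasure) (use C s disj in auto)
      ultimately have "emeasure \<nu> (C \<times> A0 k) = emeasure \<nu> (C \<times> A0 (Suc k)) + emeasure \<nu> (C \<times> cyl (Suc k) (2^k))"
        by simp
      also have "emeasure \<nu> (C \<times> cyl (Suc k) (2^k)) = emeasure \<nu> (C \<times> A0 (Suc k))"
        using invfin_iter[OF nf, of "C \<times> A0 (Suc k)" "2^k"] C pre by simp
      finally show ?thesis by (simp add: mult_2)
    qed
    have cU: "emeasure \<nu> (UNIV \<times> A0 k) = 2 * emeasure \<nu> (UNIV \<times> A0 (Suc k))"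
      using dbl[of UNIV] by simp
    have c: "emeasure \<nu> (UNIV \<times> A0 k) \<noteq> 0" "emeasure \<nu> (UNIV \<times> A0 k) \<noteq> \<infinity>"
      using c_props[OF nf nz] by auto
    have "emeasure \<nu> (UNIV \<times> A0 k) * emeasure (theta k \<nu>) B = emeasure \<nu> (B \<times> A0 k)"
      by (rule theta_em'[OF nf nz B, symmetric])
    also have "\<dots> = 2 * emeasure \<nu> (B \<times> A0 (Suc k))" by (rule dbl[OF B Binv])
    also have "\<dots> = 2 * (emeasure \<nu> (UNIV \<times> A0 (Suc k)) * emeasure (theta (Suc k) \<nu>) B)"
      using theta_em'[OF nf nz B, of "Suc k"] by simp
    also have "\<dots> = emeasure \<nu> (UNIV \<times> A0 k) * emeasure (theta (Suc k) \<nu>) B"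
      using cU by (simp add: mult.assoc)
    finally have "emeasure (theta k \<nu>) B = emeasure (theta (Suc k) \<nu>) B"
      by (rule ennreal_cancel[OF c])
    then show "emeasure (theta k \<nu>) B = 0 \<or> emeasure (theta k \<nu>) B = 1" using E1 by simp
  qed
qed

lemma dir21:
  assumes nu: "\<nu> \<in> inv_measures" and erg: "\<And>k. ergodic (theta k \<nu>) (shift ^^ (2^k))"
  shows "ergodic \<nu> SO"
proof -
  have nf: "invfin \<nu>" by (rule inv_invfin[OF nu])
  have one: "emeasure \<nu> UNIV = 1" by (rule inv_one[OF nu])
  have s: "sets \<nu> = sets (ZS \<Otimes>\<^sub>M NS)" by (rule invfin_sets[OF nf])
  have sp: "space \<nu> = UNIV" by (rule invfin_space[OF nf])
  have m: "SO \<in> \<nu> \<rightarrow>\<^sub>M \<nu>" using measurable_cong_sets[OF s s] SO_meas by blast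
  have d: "distr \<nu> \<nu> SO = \<nu>" using nu by (simp add: inv_measures_def)
  show ?thesis unfolding ergodic_def
  proof (intro conjI ballI impI m d)
    fix A assume A: "A \<in> sets \<nu>" and Ainv: "SO -` A \<inter> space \<nu> = A"
    have Ainv': "SO -` A = A" using Ainv sp by simp
    have A': "A \<in> sets (ZS \<Otimes>\<^sub>M NS)" using A s by simp
    define a where "a = emeasure \<nu> A"
    have afin: "a \<noteq> \<infinity>" using invfin_fin[OF nf] by (simp add: a_def)
    show "emeasure \<nu> A = 0 \<or> emeasure \<nu> A = 1"
    proof (rule ccontr)
      assume "\<not> (emeasure \<nu> A = 0 \<or> emeasure \<nu> A = 1)"
      then have a0: "a \<noteq> 0" and a1: "a \<noteq> 1" by (auto simp: a_def)
      define \<nu>1 where "\<nu>1 = density \<nu> (indicator A)"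
      define \<nu>2 where "\<nu>2 = density \<nu> (\<lambda>_. a)"
      have s1: "sets \<nu>1 = sets (ZS \<Otimes>\<^sub>M NS)" and s2: "sets \<nu>2 = sets (ZS \<Otimes>\<^sub>M NS)"
        by (simp_all add: \<nu>1_def \<nu>2_def s)
      have sp1: "space \<nu>1 = UNIV" and sp2: "space \<nu>2 = UNIV" by (simp_all add: \<nu>1_def \<nu>2_def sp)
      have e1: "emeasure \<nu>1 G = emeasure \<nu> (A \<inter> G)" if "G \<in> sets (ZS \<Otimes>\<^sub>M NS)" for G
        unfolding \<nu>1_def by (rule emeasure_restricted) (use A that s in auto)
      have e2: "emeasure \<nu>2 G = a * emeasure \<nu> G" if "G \<in> sets (ZS \<Otimes>\<^sub>M NS)" for G
        unfolding \<nu>2_def by (rule emeasure_density_const) (use that s in auto)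
      have G_SO: "SO -` G \<in> sets (ZS \<Otimes>\<^sub>M NS)" if "G \<in> sets (ZS \<Otimes>\<^sub>M NS)" for G
        using measurable_sets[OF SO_meas that] by simp
      have UP: "UNIV \<in> sets (ZS \<Otimes>\<^sub>M NS)" using sets.top[of "ZS \<Otimes>\<^sub>M NS"] by simp
      have U1: "emeasure \<nu>1 UNIV = a" using e1[OF UP] by (simp add: a_def)
      have U2: "emeasure \<nu>2 UNIV = a" using e2[OF UP] one by simp
      have i1: "invfin \<nu>1" unfolding invfin_def
      proof (intro conjI s1)
        show "finite_measure \<nu>1" by (rule finite_measureI) (use afin in \<open>simp add: sp1 U1 infinity_ennreal_def\<close>)
        have m1: "SO \<in> \<nu>1 \<rightarrow>\<^sub>M \<nu>1" using measurable_cong_sets[OF s1 s1] SO_meas by blast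
        show "distr \<nu>1 \<nu>1 SO = \<nu>1"
        proof (rule measure_eqI)
          fix G assume "G \<in> sets (distr \<nu>1 \<nu>1 SO)"
          then have G: "G \<in> sets (ZS \<Otimes>\<^sub>M NS)" using s1 by simp
          have "emeasure (distr \<nu>1 \<nu>1 SO) G = emeasure \<nu>1 (SO -` G)"
            using emeasure_distr[OF m1, of G] G s1 sp1 by simp
          also have "\<dots> = emeasure \<nu> (A \<inter> SO -` G)" by (rule e1[OF G_SO[OF G]])
          also have "A \<inter> SO -` G = SO -` (A \<inter> G)" using Ainv' by auto
          also have "emeasure \<nu> \<dots> = emeasure \<nu> (A \<inter> G)"
            by (rule invfin_SO_pres[OF nf]) (use A' G in auto)
          also have "\<dots> = emeasure \<nu>1 G" by (rule e1[OF G, symmetric])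
          finally show "emeasure (distr \<nu>1 \<nu>1 SO) G = emeasure \<nu>1 G" .
        qed simp
      qed
      have i2: "invfin \<nu>2" unfolding invfin_def
      proof (intro conjI s2)
        show "finite_measure \<nu>2" by (rule finite_measureI) (use afin in \<open>simp add: sp2 U2 infinity_ennreal_def\<close>)
        have m2: "SO \<in> \<nu>2 \<rightarrow>\<^sub>M \<nu>2" using measurable_cong_sets[OF s2 s2] SO_meas by blast
        show "distr \<nu>2 \<nu>2 SO = \<nu>2"
        proof (rule measure_eqI)
          fix G assume "G \<in> sets (distr \<nu>2 \<nu>2 SO)"
          then have G: "G \<in> sets (ZS \<Otimes>\<^sub>M NS)" using s2 by simp
          have "emeasure (distr \<nu>2 \<nu>2 SO) G = emeasure \<nu>2 (SO -` G)"
            using emeasure_distr[OF m2, of G] G s2 sp2 by simp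
          also have "\<dots> = a * emeasure \<nu> (SO -` G)" by (rule e2[OF G_SO[OF G]])
          also have "emeasure \<nu> (SO -` G) = emeasure \<nu> G" by (rule invfin_SO_pres[OF nf G])
          also have "a * emeasure \<nu> G = emeasure \<nu>2 G" by (rule e2[OF G, symmetric])
          finally show "emeasure (distr \<nu>2 \<nu>2 SO) G = emeasure \<nu>2 G" .
        qed simp
      qed
      have th1: "theta k \<nu>1 = theta k \<nu>" for k
      proof (rule theta_eq_dom[OF nu erg i1])
        show "emeasure \<nu>1 UNIV \<noteq> 0" using U1 a0 by simp
        fix G assume G: "G \<in> sets (ZS \<Otimes>\<^sub>M NS)" and G0: "emeasure \<nu> G = 0"
        have "emeasure \<nu> (A \<inter> G) \<le> emeasure \<nu> G" by (rule emeasure_mono) (use G s in auto)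
        then show "emeasure \<nu>1 G = 0" using e1[OF G] G0 by simp
      qed
      have th2: "theta k \<nu>2 = theta k \<nu>" for k
      proof (rule theta_eq_dom[OF nu erg i2])
        show "emeasure \<nu>2 UNIV \<noteq> 0" using U2 a0 by simp
        fix G assume G: "G \<in> sets (ZS \<Otimes>\<^sub>M NS)" and G0: "emeasure \<nu> G = 0"
        then show "emeasure \<nu>2 G = 0" using e2[OF G] by simp
      qed
      have "\<nu>1 = \<nu>2"
        by (rule invfin_uniq[OF i1 i2]) (use U1 U2 a0 th1 th2 in auto)
      then have "emeasure \<nu>1 A = emeasure \<nu>2 A" by simp
      then have "a * 1 = a * a" using e1[OF A'] e2[OF A'] by (simp add: a_def)
      then have "1 = a" by (rule ennreal_cancel[OF a0 afin])
      then show False using a1 by simp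
    qed
  qed
qed

theorem lemma3:
  assumes "\<nu> \<in> inv_measures"
  shows "(ergodic \<nu> SO \<longleftrightarrow> (\<forall>k. ergodic (theta k \<nu>) (shift ^^ (2 ^ k))))
       \<and> ((\<forall>k. ergodic (theta k \<nu>) (shift ^^ (2 ^ k)))
            \<longleftrightarrow> (\<exists>n. \<forall>k\<ge>n. ergodic (theta k \<nu>) (shift ^^ (2 ^ k))))"
proof (intro conjI iffI)
  show "ergodic \<nu> SO \<Longrightarrow> \<forall>k. ergodic (theta k \<nu>) (shift ^^ (2 ^ k))"
    using dir12[OF assms] by blast
  show "\<forall>k. ergodic (theta k \<nu>) (shift ^^ (2 ^ k)) \<Longrightarrow> ergodic \<nu> SO"
    using dir21[OF assms] by blast
  show "\<forall>k. ergodic (theta k \<nu>) (shift ^^ (2 ^ k)) \<Longrightarrow> \<exists>n. \<forall>k\<ge>n. ergodic (theta k \<nu>) (shift ^^ (2 ^ k))"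
    by blast
  assume "\<exists>n. \<forall>k\<ge>n. ergodic (theta k \<nu>) (shift ^^ (2 ^ k))"
  then obtain n where n: "\<And>k. k \<ge> n \<Longrightarrow> ergodic (theta k \<nu>) (shift ^^ (2 ^ k))" by blast
  have "\<forall>k. n \<le> k + d \<longrightarrow> ergodic (theta k \<nu>) (shift ^^ (2 ^ k))" for d
  proof (induction d)
    case 0 then show ?case using n by simp
  next
    case (Suc d)
    show ?case
    proof (intro allI impI)
      fix k assume k: "n \<le> k + Suc d"
      then have "n \<le> Suc k + d" by simp
      then have "ergodic (theta (Suc k) \<nu>) (shift ^^ (2 ^ Suc k))" using Suc.IH by blast
      then show "ergodic (theta k \<nu>) (shift ^^ (2 ^ k))" by (rule step_down[OF assms])
    qed
  qed
  then show "\<forall>k. ergodic (theta k \<nu>) (shift ^^ (2 ^ k))" by (metis le_add2)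
qed

end
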